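(* If every tree is graceful, then every tree is supergraceful.
   Context: A graceful labeling of a graph with $q$ edges is an injective map $\varphi: V \to \{0,\dots,q\}$ whose induced edge labels $|\varphi(u)-\varphi(v)|$, $uv\in E$, are pairwise distinct. For a graph with $p$ nodes and $q$ edges, a total labeling is a map $\varphi: V \to \{1,\dots,p+q\}$ such that the $p$ node labels and the $q$ edge labels $|\varphi(u)-\varphi(v)|$ are all pairwise distinct, together forming exactly $\{1,\dots,p+q\}$; a graph is supergraceful if it admits a total labeling. *)

theory Defs
  imports Main
begin

text \<open>Finite simple graphs with vertex set V (a finite set of naturals) and a
symmetric, irreflexive adjacency relation E whose edges lie inside V.
Every finite graph is isomorphic to one of this form.\<close>

definition simple_graph :: "nat set \<Rightarrow> (nat \<Rightarrow> nat \<Rightarrow> bool) \<Rightarrow> bool" where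
  "simple_graph V E \<longleftrightarrow> finite V \<and>
     (\<forall>u v. E u v \<longrightarrow> u \<in> V \<and> v \<in> V \<and> u \<noteq> v \<and> E v u)"

definition edges :: "(nat \<Rightarrow> nat \<Rightarrow> bool) \<Rightarrow> nat set set" where
  "edges E = {{u, v} | u v. E u v}"

definition connected_graph :: "nat set \<Rightarrow> (nat \<Rightarrow> nat \<Rightarrow> bool) \<Rightarrow> bool" where
  "connected_graph V E \<longleftrightarrow> (\<forall>u\<in>V. \<forall>v\<in>V. E\<^sup>*\<^sup>* u v)"

definition is_cycle :: "(nat \<Rightarrow> nat \<Rightarrow> bool) \<Rightarrow> nat list \<Rightarrow> bool" where
  "is_cycle E cs \<longleftrightarrow> length cs \<ge> 3 \<and> distinct cs \<and>
     (\<forall>i. Suc i < length cs \<longrightarrow> E (cs ! i) (cs ! Suc i)) \<and>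
     E (last cs) (hd cs)"

definition acyclic_graph :: "(nat \<Rightarrow> nat \<Rightarrow> bool) \<Rightarrow> bool" where
  "acyclic_graph E \<longleftrightarrow> (\<nexists>cs. is_cycle E cs)"

definition is_tree :: "nat set \<Rightarrow> (nat \<Rightarrow> nat \<Rightarrow> bool) \<Rightarrow> bool" where
  "is_tree V E \<longleftrightarrow> simple_graph V E \<and> V \<noteq> {} \<and> connected_graph V E \<and> acyclic_graph E"

definition elab :: "(nat \<Rightarrow> nat) \<Rightarrow> nat \<Rightarrow> nat \<Rightarrow> nat" where
  "elab \<phi> u v = (if \<phi> u \<le> \<phi> v then \<phi> v - \<phi> u else \<phi> u - \<phi> v)"

definition edge_labels_distinct :: "(nat \<Rightarrow> nat \<Rightarrow> bool) \<Rightarrow> (nat \<Rightarrow> nat) \<Rightarrow> bool" where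
  "edge_labels_distinct E \<phi> \<longleftrightarrow>
     (\<forall>u v x y. E u v \<longrightarrow> E x y \<longrightarrow> elab \<phi> u v = elab \<phi> x y \<longrightarrow> {u, v} = {x, y})"

definition graceful_labeling :: "nat set \<Rightarrow> (nat \<Rightarrow> nat \<Rightarrow> bool) \<Rightarrow> (nat \<Rightarrow> nat) \<Rightarrow> bool" where
  "graceful_labeling V E \<phi> \<longleftrightarrow>
     inj_on \<phi> V \<and> \<phi> ` V \<subseteq> {0..card (edges E)} \<and> edge_labels_distinct E \<phi>"

definition graceful :: "nat set \<Rightarrow> (nat \<Rightarrow> nat \<Rightarrow> bool) \<Rightarrow> bool" where
  "graceful V E \<longleftrightarrow> (\<exists>\<phi>. graceful_labeling V E \<phi>)"

definition total_labeling :: "nat set \<Rightarrow> (nat \<Rightarrow> nat \<Rightarrow> bool) \<Rightarrow> (nat \<Rightarrow> nat) \<Rightarrow> bool" where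
  "total_labeling V E \<phi> \<longleftrightarrow>
     \<phi> ` V \<subseteq> {1..card V + card (edges E)} \<and>
     inj_on \<phi> V \<and> edge_labels_distinct E \<phi> \<and>
     (\<forall>w\<in>V. \<forall>u v. E u v \<longrightarrow> \<phi> w \<noteq> elab \<phi> u v) \<and>
     \<phi> ` V \<union> {elab \<phi> u v | u v. E u v} = {1..card V + card (edges E)}"

definition supergraceful :: "nat set \<Rightarrow> (nat \<Rightarrow> nat \<Rightarrow> bool) \<Rightarrow> bool" where
  "supergraceful V E \<longleftrightarrow> (\<exists>\<phi>. total_labeling V E \<phi>)"

end

theory Submission imports Defs begin

definition is_path :: "(nat \<Rightarrow> nat \<Rightarrow> bool) \<Rightarrow> nat set \<Rightarrow> nat list \<Rightarrow> bool" where
  "is_path E V xs \<longleftrightarrow> xs \<noteq> [] \<and> distinct xs \<and> set xs \<subseteq> V \<and>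
     (\<forall>i. Suc i < length xs \<longrightarrow> E (xs ! i) (xs ! Suc i))"

lemma path_snoc:
  assumes "is_path E V xs" "x \<in> V" "x \<notin> set xs" "E (last xs) x"
  shows "is_path E V (xs @ [x])"
  using assms unfolding is_path_def
  apply (auto simp: nth_append last_conv_nth less_Suc_eq)
  by (drule sym) simp

lemma leaf_exists:
  assumes sg: "simple_graph V E" and ac: "acyclic_graph E" and ne: "V \<noteq> {}"
  shows "\<exists>v\<in>V. \<exists>w. \<forall>x. E v x \<longrightarrow> x = w"
proof -
  have fin: "finite V" using sg by (simp add: simple_graph_def)
  obtain v0 where "v0 \<in> V" using ne by blast
  hence p0: "is_path E V [v0]" by (simp add: is_path_def)
  have bnd: "\<forall>ys. is_path E V ys \<longrightarrow> length ys < card V + 1"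
  proof (intro allI impI)
    fix ys assume "is_path E V ys"
    hence "distinct ys" "set ys \<subseteq> V" by (auto simp: is_path_def)
    hence "length ys \<le> card V" using fin by (metis card_mono distinct_card)
    thus "length ys < card V + 1" by simp
  qed
  obtain xs where xs: "is_path E V xs" and mx: "\<forall>ys. is_path E V ys \<longrightarrow> length ys \<le> length xs"
    using Lattices_Big.ex_has_greatest_nat[of "is_path E V" "[v0]" length "card V + 1", OF p0 bnd] by blast
  define v where "v = last xs"
  have xsne: "xs \<noteq> []" using xs by (simp add: is_path_def)
  have vV: "v \<in> V" using xs xsne unfolding v_def is_path_def by auto
  define w where "w = xs ! (length xs - 2)"
  have "\<forall>x. E v x \<longrightarrow> x = w"
  proof (intro allI impI)
    fix x assume Evx: "E v x"
    have xV: "x \<in> V" and xv: "x \<noteq> v" using Evx sg by (auto simp: simple_graph_def)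
    show "x = w"
    proof (rule ccontr)
      assume xw: "x \<noteq> w"
      show False
      proof (cases "x \<in> set xs")
        case False
        have "is_path E V (xs @ [x])" using path_snoc[OF xs xV False] Evx v_def by simp
        with mx show False by fastforce
      next
        case True
        then obtain i where i: "i < length xs" "xs ! i = x" by (auto simp: in_set_conv_nth)
        have vlast: "v = xs ! (length xs - 1)" using xsne v_def by (simp add: last_conv_nth)
        have "i \<noteq> length xs - 1" using i xv vlast by auto
        moreover have "i \<noteq> length xs - 2" using i xw w_def by auto
        ultimately have i3: "i + 3 \<le> length xs" using i by linarith
        define cs where "cs = drop i xs"
        have "is_cycle E cs"
          unfolding is_cycle_def
        proof (intro conjI allI impI)
          show "3 \<le> length cs" using i3 cs_def by simp
          show "distinct cs" using xs cs_def by (simp add: is_path_def)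
          fix j assume "Suc j < length cs"
          thus "E (cs ! j) (cs ! Suc j)" using xs cs_def by (simp add: is_path_def)
        next
          have "last cs = v" using cs_def v_def i by simp
          moreover have "hd cs = x" using cs_def i by (simp add: hd_drop_conv_nth)
          ultimately show "E (last cs) (hd cs)" using Evx by simp
        qed
        thus False using ac by (auto simp: acyclic_graph_def)
      qed
    qed
  qed
  thus ?thesis using vV by blast
qed

lemma finite_edges:
  assumes "simple_graph V E" shows "finite (edges E)"
proof -
  have "edges E \<subseteq> Pow V" using assms by (auto simp: edges_def simple_graph_def)
  moreover have "finite V" using assms by (simp add: simple_graph_def)
  ultimately show ?thesis by (meson finite_Pow_iff finite_subset)
qed

lemma is_cycle_mono:
  assumes "is_cycle E' cs" "\<And>a b. E' a b \<Longrightarrow> E a b" shows "is_cycle E cs"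
  using assms unfolding is_cycle_def by blast

lemma edges_bound:
  "simple_graph V E \<Longrightarrow> acyclic_graph E \<Longrightarrow> V \<noteq> {} \<Longrightarrow> card (edges E) + 1 \<le> card V"
proof (induction "card V" arbitrary: V E rule: less_induct)
  case less
  have fin: "finite V" using less.prems by (simp add: simple_graph_def)
  obtain v w where vV: "v \<in> V" and leaf: "\<forall>x. E v x \<longrightarrow> x = w"
    using leaf_exists[OF less.prems] by blast
  show ?case
  proof (cases "V = {v}")
    case True
    have "edges E = {}" using less.prems(1) True by (auto simp: edges_def simple_graph_def)
    thus ?thesis using True by simp
  next
    case False
    define V' where "V' = V - {v}"
    define E' where "E' = (\<lambda>a b. E a b \<and> a \<noteq> v \<and> b \<noteq> v)"
    have ne: "V' \<noteq> {}" using False vV V'_def by auto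
    have sg: "simple_graph V' E'" using less.prems(1) fin
      unfolding simple_graph_def V'_def E'_def by auto
    have ac: "acyclic_graph E'" using less.prems(2) is_cycle_mono[of E' _ E]
      unfolding acyclic_graph_def E'_def by blast
    have cv: "card V' < card V" using fin vV V'_def by (metis card_Diff1_less)
    have ih: "card (edges E') + 1 \<le> card V'" using less.hyps[OF cv sg ac ne] .
    have sub: "edges E \<subseteq> insert {v, w} (edges E')"
    proof
      fix e assume "e \<in> edges E"
      then obtain a b where e: "e = {a, b}" "E a b" by (auto simp: edges_def)
      have Eba: "E b a" using e(2) less.prems(1) by (auto simp: simple_graph_def)
      show "e \<in> insert {v, w} (edges E')"
      proof (cases "a = v \<or> b = v")
        case True
        then show ?thesis using e Eba leaf by auto
      next
        case False
        then show ?thesis using e unfolding edges_def E'_def by auto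
      qed
    qed
    have "card (edges E) \<le> card (insert {v, w} (edges E'))"
      using sub finite_edges[OF sg] by (simp add: card_mono)
    also have "\<dots> \<le> card (edges E') + 1" by (simp add: card_insert_le_m1)
    finally show ?thesis using ih cv by linarith
  qed
qed

lemma elab_scale: "elab (\<lambda>x. 2 * f x + 1) u v = 2 * elab f u v"
  unfolding elab_def by auto

theorem theorem7p9:
  assumes "\<forall>V E. is_tree V E \<longrightarrow> graceful V E"
  shows "\<forall>V E. is_tree V E \<longrightarrow> supergraceful V E"
proof (intro allI impI)
  fix V E assume T: "is_tree V E"
  then obtain f where gl: "graceful_labeling V E f" using assms by (auto simp: graceful_def)
  have sg: "simple_graph V E" and ac: "acyclic_graph E" and ne: "V \<noteq> {}"
    using T by (auto simp: is_tree_def)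
  have fin: "finite V" using sg by (simp add: simple_graph_def)
  define q where "q = card (edges E)"
  have inj: "inj_on f V" and rng: "f ` V \<subseteq> {0..q}" and eld: "edge_labels_distinct E f"
    using gl by (auto simp: graceful_labeling_def q_def)
  have c1: "card V \<le> q + 1"
    using card_inj_on_le[OF inj rng] by simp
  have c2: "q + 1 \<le> card V" using edges_bound[OF sg ac ne] q_def by simp
  have p: "card V = q + 1" using c1 c2 by simp
  have fV: "f ` V = {0..q}"
    using rng card_image[OF inj] p by (simp add: card_subset_eq)
  have Euv: "u \<in> V \<and> v \<in> V \<and> u \<noteq> v" if "E u v" for u v
    using sg that by (auto simp: simple_graph_def)
  define L where "L = {elab f u v | u v. E u v}"
  define h where "h = (\<lambda>e. Max (f ` e) - Min (f ` e))"
  have h2: "h {u, v} = elab f u v" for u v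
  proof -
    have "h {u, v} = max (f u) (f v) - min (f u) (f v)" by (simp add: h_def)
    thus ?thesis unfolding elab_def by (simp add: max_def min_def)
  qed
  have LH: "L = h ` edges E"
  proof
    show "L \<subseteq> h ` edges E"
    proof
      fix l assume "l \<in> L"
      then obtain u v where "l = elab f u v" "E u v" unfolding L_def by auto
      hence "l = h {u, v}" "{u, v} \<in> edges E" using h2 unfolding edges_def by auto
      thus "l \<in> h ` edges E" by blast
    qed
    show "h ` edges E \<subseteq> L" unfolding L_def edges_def using h2 by auto
  qed
  have injh: "inj_on h (edges E)"
  proof (rule inj_onI)
    fix a b assume a: "a \<in> edges E" and b: "b \<in> edges E" and hab: "h a = h b"
    obtain u v where uv: "a = {u, v}" "E u v" using a unfolding edges_def by blast
    obtain x y where xy: "b = {x, y}" "E x y" using b unfolding edges_def by blast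
    have "elab f u v = elab f x y" using hab uv(1) xy(1) h2 by metis
    thus "a = b" using eld uv xy unfolding edge_labels_distinct_def by blast
  qed
  have cL: "card L = q" using LH card_image[OF injh] q_def by simp
  have Lsub: "L \<subseteq> {1..q}"
  proof
    fix l assume "l \<in> L"
    then obtain u v where l: "l = elab f u v" "E u v" unfolding L_def by auto
    have "u \<in> V" "v \<in> V" "u \<noteq> v" using Euv[OF l(2)] by auto
    moreover have "f u \<noteq> f v" using calculation inj by (meson inj_on_def)
    moreover have "f u \<le> q" "f v \<le> q" using calculation rng by auto
    ultimately show "l \<in> {1..q}" using l unfolding elab_def by auto
  qed
  have Leq: "L = {1..q}" using Lsub cL by (simp add: card_subset_eq)
  define \<phi> where "\<phi> = (\<lambda>x. 2 * f x + 1)"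
  have el: "elab \<phi> u v = 2 * elab f u v" for u v unfolding \<phi>_def by (rule elab_scale)
  have "total_labeling V E \<phi>"
    unfolding total_labeling_def
  proof (intro conjI)
    show "\<phi> ` V \<subseteq> {1..card V + card (edges E)}" unfolding q_def[symmetric] p
    proof
      fix n assume "n \<in> \<phi> ` V"
      then obtain x where "x \<in> V" "n = 2 * f x + 1" unfolding \<phi>_def by blast
      moreover have "f x \<le> q" using calculation(1) rng by auto
      ultimately show "n \<in> {1..q + 1 + q}" by simp
    qed
    show "inj_on \<phi> V"
    proof (rule inj_onI)
      fix x y assume xy: "x \<in> V" "y \<in> V" "\<phi> x = \<phi> y"
      hence "f x = f y" unfolding \<phi>_def by simp
      thus "x = y" using inj xy by (meson inj_onD)
    qed
    show "edge_labels_distinct E \<phi>" unfolding edge_labels_distinct_def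
    proof (intro allI impI)
      fix u v x y assume h: "E u v" "E x y" "elab \<phi> u v = elab \<phi> x y"
      hence "elab f u v = elab f x y" unfolding el by simp
      thus "{u, v} = {x, y}" using eld h(1,2) unfolding edge_labels_distinct_def by blast
    qed
    show "\<forall>w\<in>V. \<forall>u v. E u v \<longrightarrow> \<phi> w \<noteq> elab \<phi> u v"
    proof (intro ballI allI impI)
      fix w u v
      have "\<phi> w = 2 * f w + 1" unfolding \<phi>_def by simp
      then show "\<phi> w \<noteq> elab \<phi> u v" unfolding el by presburger
    qed
    have A: "\<phi> ` V = (\<lambda>k. 2 * k + 1) ` {0..q}" 
    proof -
      have "\<phi> ` V = (\<lambda>k. 2 * k + 1) ` (f ` V)" unfolding \<phi>_def by (simp add: image_image)
      thus ?thesis using fV by simp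
    qed
    have B: "{elab \<phi> u v | u v. E u v} = (\<lambda>k. 2 * k) ` L"
      unfolding el L_def by auto
    have C: "(\<lambda>k. 2 * k + 1) ` {0..q} \<union> (\<lambda>k. 2 * k) ` {1..q} = {1..2 * q + 1}"
    proof (rule set_eqI, rule iffI)
      fix n assume "n \<in> (\<lambda>k. 2 * k + 1) ` {0..q} \<union> (\<lambda>k. 2 * k) ` {1..q}"
      thus "n \<in> {1..2 * q + 1}" by auto
    next
      fix n assume n: "n \<in> {1..2 * q + 1}"
      show "n \<in> (\<lambda>k. 2 * k + 1) ` {0..q} \<union> (\<lambda>k. 2 * k) ` {1..q}"
      proof (cases "even n")
        case True
        then obtain k where "n = 2 * k" by blast
        thus ?thesis using n by auto
      next
        case False
        then obtain k where "n = 2 * k + 1" using oddE by blast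
        thus ?thesis using n by auto
      qed
    qed
    show "\<phi> ` V \<union> {elab \<phi> u v | u v. E u v} = {1..card V + card (edges E)}"
    proof -
      have "q + 1 + q = 2 * q + 1" by simp
      thus ?thesis unfolding q_def[symmetric] p A B Leq C by simp
    qed
  qed
  thus "supergraceful V E" by (auto simp: supergraceful_def)
qed

end
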